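(* Let $V$ be an $R$-module with a cyclic Whittaker vector $w\in V$ of type $\eta$ (so $V=Rw$). Then a vector $v\in V$ is a Whittaker vector of type $\eta$ if and only if $v=zw$ for some $z\in Z(R)$.
   Context: Let $f\in\mathbb{C}[H]$ be a polynomial. $R=R(f)$ is the associative $\mathbb{C}$-algebra generated by $E,F,H$ with relations $EF-FE=f(H)$, $HE-EH=E$, $HF-FH=-F$. Let $R(E)=\mathbb{C}[E]$. $Z(R)$ denotes the center of $R$ (it is the polynomial ring $\mathbb{C}[\Omega]$, $\Omega=2FE+u(H+1)$ where $f(H)=\tfrac12(u(H+1)-u(H))$). Fix an algebra homomorphism $\eta:R(E)\to\mathbb{C}$ with $\eta(E)\neq 0$. A vector $v$ of an $R$-module is a Whittaker vector of type $\eta$ if $Ev=\eta(E)v$; it is a cyclic Whittaker vector of $V$ if moreover $V=Rv$. *)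

theory Defs
  imports "HOL-Analysis.Analysis" "HOL-Computational_Algebra.Polynomial"
begin

text \<open>An R(f)-module structure on it is given by three linear operators E, F, H
  satisfying the defining relations of R(f).\<close>

definition poly_op :: "(complex \<Rightarrow> 'v::ab_group_add \<Rightarrow> 'v) \<Rightarrow> complex poly
    \<Rightarrow> ('v \<Rightarrow> 'v) \<Rightarrow> 'v \<Rightarrow> 'v" where
  "poly_op sc p T x = (\<Sum>i\<le>degree p. sc (coeff p i) ((T ^^ i) x))"

definition is_R_module :: "(complex \<Rightarrow> 'v::ab_group_add \<Rightarrow> 'v) \<Rightarrow> complex poly
    \<Rightarrow> ('v \<Rightarrow> 'v) \<Rightarrow> ('v \<Rightarrow> 'v) \<Rightarrow> ('v \<Rightarrow> 'v) \<Rightarrow> bool" where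
  "is_R_module sc f E F H \<longleftrightarrow>
     vector_space sc \<and>
     Vector_Spaces.linear sc sc E \<and> Vector_Spaces.linear sc sc F \<and> Vector_Spaces.linear sc sc H \<and>
     (\<forall>x. E (F x) - F (E x) = poly_op sc f H x) \<and>
     (\<forall>x. H (E x) - E (H x) = E x) \<and>
     (\<forall>x. H (F x) - F (H x) = - F x)"

inductive_set R_span :: "(complex \<Rightarrow> 'v::ab_group_add \<Rightarrow> 'v)
    \<Rightarrow> ('v \<Rightarrow> 'v) \<Rightarrow> ('v \<Rightarrow> 'v) \<Rightarrow> ('v \<Rightarrow> 'v) \<Rightarrow> 'v \<Rightarrow> 'v set"
  for sc E F H w where
  gen: "w \<in> R_span sc E F H w"
| zero: "0 \<in> R_span sc E F H w"
| add: "x \<in> R_span sc E F H w \<Longrightarrow> y \<in> R_span sc E F H w \<Longrightarrow> x + y \<in> R_span sc E F H w"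
| smult: "x \<in> R_span sc E F H w \<Longrightarrow> sc a x \<in> R_span sc E F H w"
| actE: "x \<in> R_span sc E F H w \<Longrightarrow> E x \<in> R_span sc E F H w"
| actF: "x \<in> R_span sc E F H w \<Longrightarrow> F x \<in> R_span sc E F H w"
| actH: "x \<in> R_span sc E F H w \<Longrightarrow> H x \<in> R_span sc E F H w"

text \<open>Whittaker vector of type eta, where c = eta(E).\<close>
definition whittaker_vector :: "('v \<Rightarrow> 'v) \<Rightarrow> (complex \<Rightarrow> 'v \<Rightarrow> 'v) \<Rightarrow> complex \<Rightarrow> 'v \<Rightarrow> bool" where
  "whittaker_vector E sc c v \<longleftrightarrow> E v = sc c v"

definition Casimir :: "(complex \<Rightarrow> 'v::ab_group_add \<Rightarrow> 'v) \<Rightarrow> complex poly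
    \<Rightarrow> ('v \<Rightarrow> 'v) \<Rightarrow> ('v \<Rightarrow> 'v) \<Rightarrow> ('v \<Rightarrow> 'v) \<Rightarrow> 'v \<Rightarrow> 'v" where
  "Casimir sc u E F H x = sc 2 (F (E x)) + poly_op sc (u \<circ>\<^sub>p [:1, 1:]) H x"

end

theory Submission imports Defs begin

definition lin :: "('a::field \<Rightarrow> 'v::ab_group_add \<Rightarrow> 'v) \<Rightarrow> ('v \<Rightarrow> 'v) \<Rightarrow> bool" where
  "lin sc T \<longleftrightarrow> (\<forall>x y. T (x + y) = T x + T y) \<and> (\<forall>a x. T (sc a x) = sc a (T x))"

locale cvs =
  fixes scale :: "complex \<Rightarrow> 'v::ab_group_add \<Rightarrow> 'v"
  assumes vs: "vector_space scale"
begin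
sublocale vector_space scale by (rule vs)


lemma lin_add: "lin scale T \<Longrightarrow> T (x + y) = T x + T y" by (simp add: lin_def)
lemma lin_scale: "lin scale T \<Longrightarrow> T (scale a x) = scale a (T x)" by (simp add: lin_def)
lemma lin_zero: "lin scale T \<Longrightarrow> T 0 = 0"
  using lin_scale[of T 0 0] by simp
lemma lin_neg: "lin scale T \<Longrightarrow> T (- x) = - T x"
  using lin_scale[of T "-1" x] by (simp add: scale_minus_left)
lemma lin_diff: "lin scale T \<Longrightarrow> T (x - y) = T x - T y"
  using lin_add[of T x "-y"] lin_neg[of T y] by simp
lemma lin_sum: "lin scale T \<Longrightarrow> T (sum g A) = (\<Sum>a\<in>A. T (g a))"
  by (induct A rule: infinite_finite_induct) (simp_all add: lin_zero lin_add)
lemma lin_id: "lin scale (\<lambda>x. x)" by (simp add: lin_def)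
lemma lin_comp: "lin scale T \<Longrightarrow> lin scale S \<Longrightarrow> lin scale (\<lambda>x. T (S x))"
  by (simp add: lin_def)
lemma lin_plus: "lin scale T \<Longrightarrow> lin scale S \<Longrightarrow> lin scale (\<lambda>x. T x + S x)"
  by (simp add: lin_def scale_right_distrib)
lemma lin_sc: "lin scale (\<lambda>x. scale b x)"
  by (simp add: lin_def scale_right_distrib mult.commute)
lemma lin_funpow: "lin scale T \<Longrightarrow> lin scale (T ^^ n)"
  by (induct n) (simp_all add: lin_def)
lemma lin_of_linear: "Vector_Spaces.linear scale scale T \<Longrightarrow> lin scale T"
  by (simp add: lin_def Vector_Spaces.linear_iff)

lemma po_N: "degree p \<le> N \<Longrightarrow> poly_op scale p T x = (\<Sum>i\<le>N. scale (coeff p i) ((T ^^ i) x))"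
  unfolding poly_op_def
  by (rule sum.mono_neutral_left) (auto simp: coeff_eq_0)

lemma po_0[simp]: "poly_op scale 0 T x = 0"
  by (simp add: poly_op_def)

lemma po_pCons: assumes "lin scale T"
  shows "poly_op scale (pCons a p) T x = scale a x + T (poly_op scale p T x)"
proof -
  have "poly_op scale (pCons a p) T x = (\<Sum>i\<le>Suc (degree p). scale (coeff (pCons a p) i) ((T ^^ i) x))"
    by (rule po_N) (simp add: degree_pCons_le)
  also have "\<dots> = scale a x + (\<Sum>i\<le>degree p. scale (coeff p i) ((T ^^ Suc i) x))"
    by (subst sum.atMost_Suc_shift) simp
  also have "(\<Sum>i\<le>degree p. scale (coeff p i) ((T ^^ Suc i) x)) = T (poly_op scale p T x)"
    unfolding poly_op_def using assms by (simp add: lin_sum lin_scale)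
  finally show ?thesis .
qed

lemma po_add: "poly_op scale (p + q) T x = poly_op scale p T x + poly_op scale q T x"
proof -
  let ?N = "max (degree p) (degree q)"
  have "degree (p + q) \<le> ?N" by (rule degree_add_le) auto
  then show ?thesis
    by (simp add: po_N[of _ ?N] scale_left_distrib sum.distrib)
qed

lemma po_smult: "poly_op scale (smult a p) T x = scale a (poly_op scale p T x)"
  by (simp add: po_N[of _ "degree p"] scale_sum_right)

lemma po_const: "poly_op scale [:a:] T x = scale a x"
  by (simp add: poly_op_def)

lemma po_lin: assumes T: "lin scale T" shows "lin scale (poly_op scale p T)"
proof (induct p rule: pCons_induct)
  case 0 then show ?case by (simp add: lin_def)
next
  case (pCons a p)
  have "poly_op scale (pCons a p) T = (\<lambda>x. scale a x + T (poly_op scale p T x))"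
    using T by (simp add: po_pCons fun_eq_iff)
  then show ?case using lin_plus[OF lin_sc lin_comp[OF T pCons(2)]] by simp
qed

lemma po_intertwine:
  assumes "lin scale S" "lin scale T" "lin scale T'" "\<And>y. S (T y) = T' (S y)"
  shows "S (poly_op scale p T x) = poly_op scale p T' (S x)"
  using assms
  by (induct p arbitrary: x rule: pCons_induct) (simp_all add: po_pCons lin_zero lin_add lin_scale)

lemma po_comp:
  assumes "lin scale T"
  shows "poly_op scale p (\<lambda>y. T y + scale b y) x = poly_op scale (p \<circ>\<^sub>p [:b, 1:]) T x"
proof (induct p rule: pCons_induct)
  case 0 then show ?case by simp
next
  case (pCons a p)
  have lT: "lin scale (\<lambda>y. T y + scale b y)" using assms lin_plus lin_sc by blast
  have e: "[:b, 1:] * r = smult b r + pCons 0 r" for r :: "complex poly"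
    by simp
  show ?case
    using pCons assms lT
    by (simp add: po_pCons pcompose_pCons e po_add po_const po_smult)
qed

end

locale WM = cvs scale for scale :: "complex \<Rightarrow> 'v::ab_group_add \<Rightarrow> 'v" +
  fixes f u :: "complex poly" and E F H :: "'v \<Rightarrow> 'v" and c :: complex and w :: 'v
  assumes linE: "lin scale E" and linF: "lin scale F" and linH: "lin scale H"
  and EF: "\<And>x. E (F x) - F (E x) = poly_op scale f H x"
  and HE: "\<And>x. H (E x) - E (H x) = E x"
  and HF: "\<And>x. H (F x) - F (H x) = - F x"
  and fu: "smult 2 f + u = u \<circ>\<^sub>p [:1,1:]"
  and cnz: "c \<noteq> 0" and Ew: "E w = scale c w"
begin

abbreviation "Om \<equiv> Casimir scale u E F H"

lemma Om_eq: "Om x = scale 2 (F (E x)) + poly_op scale (u \<circ>\<^sub>p [:1,1:]) H x"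
  by (simp add: Casimir_def)

lemma EH: "E (H x) = H (E x) + scale (-1) (E x)"
  using HE[of x] by (simp add: algebra_simps)
lemma FH: "F (H x) = H (F x) + scale 1 (F x)"
  using HF[of x] by (simp add: algebra_simps)
lemma EF': "E (F x) = F (E x) + poly_op scale f H x"
  using EF[of x] by (simp add: algebra_simps)

lemma linHb: "lin scale (\<lambda>y. H y + scale b y)"
  by (rule lin_plus[OF linH lin_sc])

lemma E_po: "E (poly_op scale p H x) = poly_op scale (p \<circ>\<^sub>p [:-1,1:]) H (E x)"
proof -
  have "E (poly_op scale p H x) = poly_op scale p (\<lambda>y. H y + scale (-1) y) (E x)"
    by (rule po_intertwine[OF linE linH linHb]) (rule EH)
  also have "\<dots> = poly_op scale (p \<circ>\<^sub>p [:-1,1:]) H (E x)"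
    by (rule po_comp[OF linH])
  finally show ?thesis .
qed

lemma F_po: "F (poly_op scale p H x) = poly_op scale (p \<circ>\<^sub>p [:1,1:]) H (F x)"
proof -
  have "F (poly_op scale p H x) = poly_op scale p (\<lambda>y. H y + scale 1 y) (F x)"
    by (rule po_intertwine[OF linF linH linHb]) (rule FH)
  also have "\<dots> = poly_op scale (p \<circ>\<^sub>p [:1,1:]) H (F x)"
    by (rule po_comp[OF linH])
  finally show ?thesis .
qed

lemma H_po: "H (poly_op scale p H x) = poly_op scale p H (H x)"
  by (rule po_intertwine[OF linH linH linH]) simp

lemma u1_back: "(u \<circ>\<^sub>p [:1,1:]) \<circ>\<^sub>p [:-1,1:] = u"
proof -
  have "[:1,1:] \<circ>\<^sub>p [:-1,1::complex:] = [:0,1:]" by (simp add: pcompose_pCons)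
  then show ?thesis by (simp flip: pcompose_assoc)
qed

lemma u1_fwd: "(u \<circ>\<^sub>p [:1,1:]) \<circ>\<^sub>p [:1,1:] = smult 2 (f \<circ>\<^sub>p [:1,1:]) + u \<circ>\<^sub>p [:1,1:]"
  by (simp flip: fu add: pcompose_add pcompose_smult)

lemma linOm: "lin scale Om"
proof -
  have "Om = (\<lambda>x. scale 2 (F (E x)) + poly_op scale (u \<circ>\<^sub>p [:1,1:]) H x)"
    by (simp add: fun_eq_iff Om_eq)
  moreover have "lin scale (\<lambda>x. scale 2 (F (E x)) + poly_op scale (u \<circ>\<^sub>p [:1,1:]) H x)"
    by (rule lin_plus[OF lin_comp[OF lin_sc lin_comp[OF linF linE]] po_lin[OF linH]])
  ultimately show ?thesis by simp
qed

lemma Om_E: "E (Om x) = Om (E x)"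
proof -
  have "E (Om x) = scale 2 (F (E (E x)) + poly_op scale f H (E x)) + poly_op scale u H (E x)"
    by (simp add: Om_eq lin_add[OF linE] lin_scale[OF linE] EF' E_po u1_back)
  also have "\<dots> = Om (E x)"
    by (simp add: Om_eq flip: fu add: po_add po_smult scale_right_distrib add.assoc)
  finally show ?thesis .
qed

lemma Om_F: "F (Om x) = Om (F x)"
proof -
  have "F (Om x) = scale 2 (F (F (E x))) + poly_op scale (smult 2 (f \<circ>\<^sub>p [:1,1:]) + u \<circ>\<^sub>p [:1,1:]) H (F x)"
    by (simp add: Om_eq lin_add[OF linF] lin_scale[OF linF] F_po u1_fwd)
  also have "\<dots> = Om (F x)"
    by (simp add: Om_eq EF' lin_add[OF linF] F_po po_add po_smult scale_right_distrib add.assoc)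
  finally show ?thesis .
qed

lemma Om_H: "H (Om x) = Om (H x)"
proof -
  have "H (F (E x)) = F (E (H x))"
    using FH[of "E x"] EH[of x] by (simp add: lin_diff[OF linF])
  then show ?thesis
    by (simp add: Om_eq lin_add[OF linH] lin_scale[OF linH] H_po)
qed

end

context WM begin

definition "subsp S \<longleftrightarrow> 0 \<in> S \<and> (\<forall>x\<in>S. \<forall>y\<in>S. x + y \<in> S) \<and> (\<forall>a. \<forall>x\<in>S. scale a x \<in> S)"

fun good :: "'v set \<Rightarrow> nat \<Rightarrow> 'v set" where
  "good S 0 = {0}"
| "good S (Suc m) = {(H ^^ m) z + y | z y. z \<in> S \<and> y \<in> good S m}"

lemma Hpow0: "(H ^^ m) 0 = 0"
  by (rule lin_zero[OF lin_funpow[OF linH]])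

lemma good_SucI: "z \<in> S \<Longrightarrow> y \<in> good S m \<Longrightarrow> (H ^^ m) z + y \<in> good S (Suc m)"
  by auto

lemma good_SucE: "x \<in> good S (Suc m) \<Longrightarrow> (\<And>z y. x = (H ^^ m) z + y \<Longrightarrow> z \<in> S \<Longrightarrow> y \<in> good S m \<Longrightarrow> P) \<Longrightarrow> P"
  by auto

declare good.simps(2)[simp del]

lemma good_0: "subsp S \<Longrightarrow> 0 \<in> good S m"
proof (induct m)
  case (Suc m) then show ?case
    using good_SucI[of 0 S 0 m] by (simp add: subsp_def Hpow0)
qed simp

lemma good_add: "subsp S \<Longrightarrow> x \<in> good S m \<Longrightarrow> y \<in> good S m \<Longrightarrow> x + y \<in> good S m"
proof (induct m arbitrary: x y)
  case (Suc m)
  from Suc.prems obtain z1 y1 z2 y2 where x: "x = (H ^^ m) z1 + y1" "z1 \<in> S" "y1 \<in> good S m"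
    and y: "y = (H ^^ m) z2 + y2" "z2 \<in> S" "y2 \<in> good S m" by (blast elim: good_SucE)
  have eq: "x + y = (H ^^ m) (z1 + z2) + (y1 + y2)"
    unfolding x y by (simp add: lin_add[OF lin_funpow[OF linH]] algebra_simps)
  have "z1 + z2 \<in> S" using Suc.prems x y by (simp add: subsp_def)
  moreover have "y1 + y2 \<in> good S m" using Suc x y by simp
  ultimately show ?case unfolding eq by (rule good_SucI)
qed simp

lemma good_scale: "subsp S \<Longrightarrow> x \<in> good S m \<Longrightarrow> scale a x \<in> good S m"
proof (induct m arbitrary: x)
  case (Suc m)
  from Suc.prems obtain z1 y1 where "x = (H ^^ m) z1 + y1" "z1 \<in> S" "y1 \<in> good S m" by (blast elim: good_SucE)
  moreover have "scale a ((H ^^ m) z1 + y1) = (H ^^ m) (scale a z1) + scale a y1"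
    by (simp add: lin_scale[OF lin_funpow[OF linH]] scale_right_distrib)
  moreover have "scale a z1 \<in> S" using Suc.prems calculation by (simp add: subsp_def)
  ultimately show ?case using Suc by (simp add: good_SucI)
qed simp

lemma good_Suc: "subsp S \<Longrightarrow> x \<in> good S m \<Longrightarrow> x \<in> good S (Suc m)"
  using good_SucI[of 0 S x m] by (simp add: subsp_def Hpow0)

lemma good_le: "subsp S \<Longrightarrow> m \<le> n \<Longrightarrow> x \<in> good S m \<Longrightarrow> x \<in> good S n"
proof (induct n)
  case 0 then show ?case by simp
next
  case (Suc n) then show ?case
    by (cases "m = Suc n") (auto intro: good_Suc)
qed

lemma good_H: "subsp S \<Longrightarrow> x \<in> good S m \<Longrightarrow> H x \<in> good S (Suc m)"
proof (induct m arbitrary: x)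
  case 0 then show ?case using good_0[of S 1] by (simp add: lin_zero[OF linH])
next
  case (Suc m)
  from Suc.prems obtain z1 y1 where x: "x = (H ^^ m) z1 + y1" "z1 \<in> S" "y1 \<in> good S m" by (blast elim: good_SucE)
  have eq: "H x = (H ^^ Suc m) z1 + H y1"
    unfolding x by (simp add: lin_add[OF linH])
  have "H y1 \<in> good S (Suc m)" using Suc x by simp
  with x(2) show ?case unfolding eq by (rule good_SucI)
qed

lemma good_mono: "S \<subseteq> S' \<Longrightarrow> good S m \<subseteq> good S' m"
proof (induct m)
  case (Suc m) then show ?case by (blast elim: good_SucE intro: good_SucI)
qed simp

lemma good_in: "subsp S \<Longrightarrow> z \<in> S \<Longrightarrow> z \<in> good S (Suc 0)"
  using good_SucI[of z S 0 0] by simp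

definition "GA S x \<longleftrightarrow> (\<exists>m. x \<in> good S m)"

lemma GA_add: "subsp S \<Longrightarrow> GA S x \<Longrightarrow> GA S y \<Longrightarrow> GA S (x + y)"
  unfolding GA_def
proof (elim exE)
  fix m n assume "subsp S" "x \<in> good S m" "y \<in> good S n"
  then have "x + y \<in> good S (max m n)"
    by (intro good_add good_le[of S m "max m n"] good_le[of S n "max m n"]) auto
  then show "\<exists>m. x + y \<in> good S m" ..
qed

lemma GA_scale: "subsp S \<Longrightarrow> GA S x \<Longrightarrow> GA S (scale a x)"
  unfolding GA_def using good_scale by blast

lemma GA_diff: "subsp S \<Longrightarrow> GA S x \<Longrightarrow> GA S y \<Longrightarrow> GA S (x - y)"
  using GA_add[of S x "scale (-1) y"] GA_scale[of S y "-1"] by simp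

lemma GA_H: "subsp S \<Longrightarrow> GA S x \<Longrightarrow> GA S (H x)"
  unfolding GA_def using good_H by blast

lemma GA_in: "subsp S \<Longrightarrow> z \<in> S \<Longrightarrow> GA S z"
  unfolding GA_def using good_in by blast

lemma GA_0: "subsp S \<Longrightarrow> GA S 0"
  unfolding GA_def using good_0 by blast

lemma GA_po: "subsp S \<Longrightarrow> GA S z \<Longrightarrow> GA S (poly_op scale q H z)"
proof (induct q rule: pCons_induct)
  case 0 then show ?case by (simp add: GA_0)
next
  case (pCons a q) then show ?case
    by (simp add: po_pCons[OF linH] GA_add GA_scale GA_H)
qed

lemma GA_Hm: "subsp S \<Longrightarrow> GA S z \<Longrightarrow> GA S (((\<lambda>y. H y - y) ^^ m) z)"
  by (induct m) (simp_all add: GA_diff GA_H)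
lemma GA_Hp: "subsp S \<Longrightarrow> GA S z \<Longrightarrow> GA S (((\<lambda>y. H y + y) ^^ m) z)"
  by (induct m) (simp_all add: GA_add GA_H)

lemma E_Hpow: "E ((H ^^ m) z) = ((\<lambda>y. H y - y) ^^ m) (E z)"
  by (induct m) (simp_all add: EH)

lemma F_Hpow: "F ((H ^^ m) z) = ((\<lambda>y. H y + y) ^^ m) (F z)"
  by (induct m) (simp_all add: FH)

definition "AA = range (\<lambda>p. poly_op scale p Om w)"

lemma subsp_AA: "subsp AA"
  unfolding subsp_def AA_def
proof (intro conjI ballI allI)
  show "0 \<in> range (\<lambda>p. poly_op scale p Om w)" by (rule range_eqI[where x=0]) simp
next
  fix x y assume "x \<in> range (\<lambda>p. poly_op scale p Om w)" "y \<in> range (\<lambda>p. poly_op scale p Om w)"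
  then obtain p q where "x = poly_op scale p Om w" "y = poly_op scale q Om w" by auto
  then show "x + y \<in> range (\<lambda>p. poly_op scale p Om w)" by (intro range_eqI[where x="p + q"]) (simp add: po_add)
next
  fix a x assume "x \<in> range (\<lambda>p. poly_op scale p Om w)"
  then obtain p where "x = poly_op scale p Om w" by auto
  then show "scale a x \<in> range (\<lambda>p. poly_op scale p Om w)" by (intro range_eqI[where x="smult a p"]) (simp add: po_smult)
qed

lemma E_AA: "z \<in> AA \<Longrightarrow> E z = scale c z"
proof -
  assume "z \<in> AA"
  then obtain p where z: "z = poly_op scale p Om w" by (auto simp: AA_def)
  have "E z = poly_op scale p Om (E w)"
    unfolding z by (rule po_intertwine[OF linE linOm linOm]) (rule Om_E)
  also have "\<dots> = scale c z" unfolding z Ew by (rule lin_scale[OF po_lin[OF linOm]])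
  finally show ?thesis .
qed

lemma E_good: "x \<in> good AA m \<Longrightarrow> GA AA (E x)"
proof (induct m arbitrary: x)
  case 0 then show ?case by (simp add: lin_zero[OF linE] GA_0 subsp_AA)
next
  case (Suc m)
  from Suc.prems obtain z1 y1 where x: "x = (H ^^ m) z1 + y1" "z1 \<in> AA" "y1 \<in> good AA m" by (blast elim: good_SucE)
  have "E x = ((\<lambda>y. H y - y) ^^ m) (scale c z1) + E y1"
    using x by (simp add: lin_add[OF linE] E_Hpow E_AA)
  moreover have "GA AA (scale c z1)" using x subsp_AA by (simp add: GA_in subsp_def)
  ultimately show ?case using Suc x by (simp add: GA_add GA_Hm GA_Hp subsp_AA)
qed

lemma Fw: "F w = scale (1 / (2 * c)) (Om w - poly_op scale (u \<circ>\<^sub>p [:1,1:]) H w)"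
proof -
  have "Om w - poly_op scale (u \<circ>\<^sub>p [:1,1:]) H w = scale (2 * c) (F w)"
    by (simp add: Om_eq Ew lin_scale[OF linF])
  then show ?thesis using cnz by simp
qed

lemma F_AA: "z \<in> AA \<Longrightarrow> GA AA (F z)"
proof -
  assume "z \<in> AA"
  then obtain p where z: "z = poly_op scale p Om w" by (auto simp: AA_def)
  let ?P = "poly_op scale (u \<circ>\<^sub>p [:1,1:]) H"
  have linP: "lin scale ?P" by (rule po_lin[OF linH])
  have "F z = poly_op scale p Om (F w)"
    unfolding z by (rule po_intertwine[OF linF linOm linOm]) (rule Om_F)
  also have "\<dots> = scale (1 / (2 * c)) (poly_op scale p Om (Om w) - poly_op scale p Om (?P w))"
    unfolding Fw by (simp add: lin_scale[OF po_lin[OF linOm]] lin_diff[OF po_lin[OF linOm]])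
  also have "poly_op scale p Om (?P w) = ?P z"
    unfolding z
  proof (rule sym, rule po_intertwine[OF linP linOm linOm])
    fix y show "?P (Om y) = Om (?P y)"
      by (rule po_intertwine[OF linOm linH linH, symmetric]) (rule Om_H[symmetric])
  qed
  also have "poly_op scale p Om (Om w) = poly_op scale (pCons 0 p) Om w"
    using po_intertwine[OF linOm linOm linOm, of p w] by (simp add: po_pCons[OF linOm])
  finally have "F z = scale (1 / (2 * c)) (poly_op scale (pCons 0 p) Om w - ?P z)" .
  moreover have "GA AA (poly_op scale (pCons 0 p) Om w)" by (rule GA_in[OF subsp_AA]) (simp add: AA_def)
  moreover have "GA AA (?P z)" using \<open>z \<in> AA\<close> by (simp add: GA_po GA_in subsp_AA)
  ultimately show ?thesis by (simp add: GA_scale GA_diff subsp_AA)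
qed

lemma F_good: "x \<in> good AA m \<Longrightarrow> GA AA (F x)"
proof (induct m arbitrary: x)
  case 0 then show ?case by (simp add: lin_zero[OF linF] GA_0 subsp_AA)
next
  case (Suc m)
  from Suc.prems obtain z1 y1 where x: "x = (H ^^ m) z1 + y1" "z1 \<in> AA" "y1 \<in> good AA m" by (blast elim: good_SucE)
  have "F x = ((\<lambda>y. H y + y) ^^ m) (F z1) + F y1"
    using x by (simp add: lin_add[OF linF] F_Hpow)
  then show ?case using Suc x F_AA by (simp add: GA_add GA_Hm GA_Hp subsp_AA)
qed

lemma span_GA: "x \<in> R_span scale E F H w \<Longrightarrow> GA AA x"
proof (induct rule: R_span.induct)
  case gen
  have "w = poly_op scale 1 Om w" by (simp add: po_const flip: pCons_one)
  then have "w \<in> AA" unfolding AA_def by blast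
  then show ?case by (rule GA_in[OF subsp_AA])
next
  case zero then show ?case by (rule GA_0[OF subsp_AA])
next
  case (add x y) then show ?case by (simp add: GA_add subsp_AA)
next
  case (smult x a) then show ?case by (simp add: GA_scale subsp_AA)
next
  case (actE x) then show ?case using E_good by (auto simp: GA_def)
next
  case (actF x) then show ?case using F_good by (auto simp: GA_def)
next
  case (actH x) then show ?case by (simp add: GA_H subsp_AA)
qed

end

context WM begin

definition "WW = {x. E x = scale c x}"

lemma subsp_WW: "subsp WW"
  unfolding subsp_def WW_def
  by (simp add: lin_zero[OF linE] lin_add[OF linE] lin_scale[OF linE] scale_right_distrib mult.commute)

lemma AA_WW: "AA \<subseteq> WW"
  using E_AA by (auto simp: WW_def)

lemma WW_scale: "z \<in> WW \<Longrightarrow> scale a z \<in> WW"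
  using subsp_WW by (simp add: subsp_def)

lemma linK: "lin scale (\<lambda>y. H y - y)"
  using linHb[of "-1"] by simp

lemma good_diff: "subsp S \<Longrightarrow> x \<in> good S m \<Longrightarrow> y \<in> good S m \<Longrightarrow> x - y \<in> good S m"
  using good_add[of S x m "scale (-1) y"] good_scale[of S y m "-1"] by simp

lemma K_step:
  assumes z: "z \<in> WW"
  shows "\<exists>y\<in>good WW m. ((\<lambda>y. H y - y) ^^ Suc m) z = (H ^^ Suc m) z - scale (of_nat (Suc m)) ((H ^^ m) z) + y"
proof (induct m)
  case 0
  show ?case by (rule bexI[of _ 0]) (simp_all add: good_0[OF subsp_WW])
next
  case (Suc m)
  then obtain y where y: "y \<in> good WW m"
    and e: "((\<lambda>y. H y - y) ^^ Suc m) z = (H ^^ Suc m) z - scale (of_nat (Suc m)) ((H ^^ m) z) + y" by blast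
  define y' where "y' = H y + scale (of_nat (Suc m)) ((H ^^ m) z) - y"
  have "H y \<in> good WW (Suc m)" using good_H[OF subsp_WW y] .
  moreover have "(H ^^ m) z \<in> good WW (Suc m)"
    using good_SucI[OF z good_0[OF subsp_WW], of m] by simp
  moreover have "y \<in> good WW (Suc m)" using good_Suc[OF subsp_WW y] .
  ultimately have y'g: "y' \<in> good WW (Suc m)" unfolding y'_def
    by (intro good_diff good_add good_scale subsp_WW) auto
  have sc_suc: "scale (of_nat (Suc (Suc m))) X = scale (of_nat (Suc m)) X + X" for X
  proof -
    have "of_nat (Suc (Suc m)) = of_nat (Suc m) + (1::complex)" by simp
    then show ?thesis by (simp only: scale_left_distrib scale_one)
  qed
  have "((\<lambda>y. H y - y) ^^ Suc (Suc m)) z = H (((\<lambda>y. H y - y) ^^ Suc m) z) - ((\<lambda>y. H y - y) ^^ Suc m) z"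
    by simp
  also have "\<dots> = (H ^^ Suc (Suc m)) z - scale (of_nat (Suc (Suc m))) ((H ^^ Suc m) z) + y'"
    unfolding e y'_def sc_suc
    by (simp add: lin_add[OF linH] lin_diff[OF linH] lin_scale[OF linH] algebra_simps)
  finally show ?case using y'g by blast
qed

lemma D_Hpow:
  assumes z: "z \<in> WW"
  shows "\<exists>y\<in>good WW m. E ((H ^^ Suc m) z) - scale c ((H ^^ Suc m) z)
           = (H ^^ m) (scale (- (c * of_nat (Suc m))) z) + y"
proof -
  obtain y where y: "y \<in> good WW m"
    and e: "((\<lambda>y. H y - y) ^^ Suc m) z = (H ^^ Suc m) z - scale (of_nat (Suc m)) ((H ^^ m) z) + y"
    using K_step[OF z] by blast
  have "E ((H ^^ Suc m) z) = ((\<lambda>y. H y - y) ^^ Suc m) (E z)" by (rule E_Hpow)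
  also have "\<dots> = ((\<lambda>y. H y - y) ^^ Suc m) (scale c z)"
    using z by (simp only: WW_def mem_Collect_eq)
  also have "\<dots> = scale c (((\<lambda>y. H y - y) ^^ Suc m) z)"
    by (rule lin_scale[OF lin_funpow[OF linK]])
  finally have "E ((H ^^ Suc m) z) - scale c ((H ^^ Suc m) z)
      = (H ^^ m) (scale (- (c * of_nat (Suc m))) z) + scale c y"
    unfolding e lin_scale[OF lin_funpow[OF linH]]
    by (simp add: scale_right_distrib scale_right_diff_distrib
        scale_scale algebra_simps del: funpow.simps)
  moreover have "scale c y \<in> good WW m" using good_scale[OF subsp_WW y] .
  ultimately show ?thesis by blast
qed

lemma D_add: "E (x + y) - scale c (x + y) = (E x - scale c x) + (E y - scale c y)"
  by (simp add: lin_add[OF linE] scale_right_distrib algebra_simps)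

lemma D_good: "y \<in> good WW (Suc m) \<Longrightarrow> E y - scale c y \<in> good WW m"
proof (induct m arbitrary: y)
  case 0
  then obtain z y0 where "y = (H ^^ 0) z + y0" "z \<in> WW" "y0 \<in> good WW 0" by (blast elim: good_SucE)
  then show ?case by (simp add: WW_def)
next
  case (Suc m)
  then obtain z y0 where y: "y = (H ^^ Suc m) z + y0" "z \<in> WW" "y0 \<in> good WW (Suc m)" by (blast elim: good_SucE)
  obtain y1 where y1: "y1 \<in> good WW m" and
    e: "E ((H ^^ Suc m) z) - scale c ((H ^^ Suc m) z) = (H ^^ m) (scale (- (c * of_nat (Suc m))) z) + y1"
    using D_Hpow[OF y(2)] by blast
  have "E y - scale c y = (H ^^ m) (scale (- (c * of_nat (Suc m))) z) + (y1 + (E y0 - scale c y0))"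
    unfolding y(1) D_add e by (simp add: add.assoc)
  moreover have "scale (- (c * of_nat (Suc m))) z \<in> WW" using y(2) by (rule WW_scale)
  moreover have "y1 + (E y0 - scale c y0) \<in> good WW m"
    using Suc.hyps[OF y(3)] y1 by (simp add: good_add subsp_WW)
  ultimately show ?case by (simp add: good_SucI)
qed

lemma indep: "z \<in> WW \<Longrightarrow> y \<in> good WW m \<Longrightarrow> (H ^^ m) z + y = 0 \<Longrightarrow> z = 0"
proof (induct m arbitrary: z y)
  case 0 then show ?case by simp
next
  case (Suc m)
  obtain y1 where y1: "y1 \<in> good WW m" and
    e: "E ((H ^^ Suc m) z) - scale c ((H ^^ Suc m) z) = (H ^^ m) (scale (- (c * of_nat (Suc m))) z) + y1"
    using D_Hpow[OF Suc.prems(1)] by blast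
  have "E ((H ^^ Suc m) z + y) - scale c ((H ^^ Suc m) z + y) = 0"
    using Suc.prems(3) by (simp add: lin_zero[OF linE])
  then have "(H ^^ m) (scale (- (c * of_nat (Suc m))) z) + (y1 + (E y - scale c y)) = 0"
    unfolding D_add e by (simp add: add.assoc)
  moreover have "scale (- (c * of_nat (Suc m))) z \<in> WW" using Suc.prems(1) by (rule WW_scale)
  moreover have "y1 + (E y - scale c y) \<in> good WW m"
    using D_good[OF Suc.prems(2)] y1 by (simp add: good_add subsp_WW)
  ultimately have "scale (- (c * of_nat (Suc m))) z = 0" using Suc.hyps by blast
  then show ?case using cnz of_nat_neq_0[where 'a=complex, of m] by simp
qed

lemma main_AA: "x \<in> good AA m \<Longrightarrow> x \<in> WW \<Longrightarrow> x \<in> AA"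
proof (induct m arbitrary: x)
  case 0 then show ?case using subsp_AA by (simp add: subsp_def)
next
  case (Suc m)
  then obtain z y where x: "x = (H ^^ m) z + y" "z \<in> AA" "y \<in> good AA m" by (blast elim: good_SucE)
  show ?case
  proof (cases m)
    case 0 then show ?thesis using x by simp
  next
    case (Suc k)
    have zW: "z \<in> WW" using x(2) AA_WW by blast
    have yW: "y \<in> good WW (Suc k)" using x(3) good_mono[OF AA_WW] Suc by blast
    obtain y1 where y1: "y1 \<in> good WW k" and
      e: "E ((H ^^ Suc k) z) - scale c ((H ^^ Suc k) z) = (H ^^ k) (scale (- (c * of_nat (Suc k))) z) + y1"
      using D_Hpow[OF zW] by blast
    have "E x - scale c x = 0" using Suc.prems(2) by (simp add: WW_def)
    then have "(H ^^ k) (scale (- (c * of_nat (Suc k))) z) + (y1 + (E y - scale c y)) = 0"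
      unfolding x(1) Suc D_add e by (simp add: add.assoc)
    moreover have "scale (- (c * of_nat (Suc k))) z \<in> WW" using zW by (rule WW_scale)
    moreover have "y1 + (E y - scale c y) \<in> good WW k"
      using D_good[OF yW] y1 by (simp add: good_add subsp_WW)
    ultimately have "scale (- (c * of_nat (Suc k))) z = 0" using indep by blast
    then have "z = 0" using cnz of_nat_neq_0[where 'a=complex, of k] by simp
    then have "x = y" using x(1) by (simp add: Hpow0)
    then show ?thesis using Suc.hyps x(3) Suc.prems(2) by simp
  qed
qed

end

theorem mainTheorem4:
  fixes sc :: "complex \<Rightarrow> 'v::ab_group_add \<Rightarrow> 'v"
    and f u :: "complex poly"
    and E F H :: "'v \<Rightarrow> 'v"
    and c :: complex and w v :: 'v
  assumes u_def: "\<forall>x. poly f x = (poly u (x + 1) - poly u x) / 2"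
    and module: "is_R_module sc f E F H"
    and c_nz: "c \<noteq> 0"
    and w_whit: "whittaker_vector E sc c w"
    and cyclic: "R_span sc E F H w = UNIV"
  shows "whittaker_vector E sc c v \<longleftrightarrow>
         (\<exists>p :: complex poly. v = poly_op sc p (Casimir sc u E F H) w)"
proof -
  have vs: "vector_space sc" using module by (simp add: is_R_module_def)
  interpret cvs sc by (rule cvs.intro[OF vs])
  have fu: "smult 2 f + u = u \<circ>\<^sub>p [:1,1:]"
  proof (rule poly_eq_poly_eq_iff[THEN iffD1], rule ext)
    fix x :: complex
    show "poly (smult 2 f + u) x = poly (u \<circ>\<^sub>p [:1,1:]) x"
    proof -
      have "poly f x * 2 = poly u (x + 1) - poly u x" using u_def by simp
      then show ?thesis by (simp add: poly_pcompose algebra_simps)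
    qed
  qed
  interpret WM sc f u E F H c w
    apply unfold_locales
    using module w_whit c_nz fu
    by (simp_all add: is_R_module_def whittaker_vector_def lin_of_linear)
  show ?thesis
  proof
    assume "whittaker_vector E sc c v"
    then have "v \<in> WW" by (simp add: WW_def whittaker_vector_def)
    moreover have "GA AA v" using span_GA cyclic by auto
    ultimately have "v \<in> AA" using main_AA by (auto simp: GA_def)
    then show "\<exists>p. v = poly_op sc p (Casimir sc u E F H) w" by (auto simp: AA_def)
  next
    assume "\<exists>p. v = poly_op sc p (Casimir sc u E F H) w"
    then have "v \<in> AA" by (auto simp: AA_def)
    then show "whittaker_vector E sc c v" using E_AA by (simp add: whittaker_vector_def)
  qed
qed

end
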